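(* For $d=2$ and $U\in C^\infty(\mathbb{T}^2)$, $Q(U)={}^tP\,D(-U)\,P$, where $P=\begin{pmatrix}0&-1\\1&0\end{pmatrix}$.
   Context: $\mathbb{T}^2=\mathbb{R}^2/\mathbb{Z}^2$. $D(W)$: ${}^tlD(W)l=\inf_{f\in C^\infty(\mathbb{T}^2)}\int|l-\nabla f|^2e^{-2W}dx/\int e^{-2W}$. $\mathcal{F}_{sol}=\{p\in(C^\infty(\mathbb{T}^2))^2:\operatorname{div}p=0,\ \int p\,dx=0\}$; $Q(U)$ is the symmetric matrix with ${}^tlQ(U)l=\inf_{p\in\mathcal{F}_{sol}}\int|l-p|^2e^{2U}dx/\int e^{2U}dx$. *)

theory Defs
  imports "HOL-Analysis.Analysis"
begin

text \<open>Functions on the torus T^2 = R^2/Z^2 are represented as Z^2-periodic functions on R^2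
  (here the Euclidean space real^2); integrals over T^2 are integrals over the unit square.\<close>

definition partial :: "2 \<Rightarrow> (real^2 \<Rightarrow> real) \<Rightarrow> real^2 \<Rightarrow> real" where
  "partial i f x = frechet_derivative f (at x) (axis i 1)"

fun Ck :: "nat \<Rightarrow> (real^2 \<Rightarrow> real) \<Rightarrow> bool" where
  "Ck 0 f = continuous_on UNIV f"
| "Ck (Suc k) f = ((\<forall>x. f differentiable (at x)) \<and> continuous_on UNIV f
                    \<and> (\<forall>i. Ck k (partial i f)))"

definition smooth :: "(real^2 \<Rightarrow> real) \<Rightarrow> bool" where
  "smooth f \<longleftrightarrow> (\<forall>k. Ck k f)"

definition periodic :: "(real^2 \<Rightarrow> 'b) \<Rightarrow> bool" where
  "periodic f \<longleftrightarrow> (\<forall>x i. f (x + axis i 1) = f x)"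

definition Cinf_T2 :: "(real^2 \<Rightarrow> real) set" where
  "Cinf_T2 = {f. smooth f \<and> periodic f}"

definition grad :: "(real^2 \<Rightarrow> real) \<Rightarrow> real^2 \<Rightarrow> real^2" where
  "grad f x = (\<chi> i. partial i f x)"

definition div2 :: "(real^2 \<Rightarrow> real^2) \<Rightarrow> real^2 \<Rightarrow> real" where
  "div2 p x = (\<Sum>i\<in>UNIV. partial i (\<lambda>y. p y $ i) x)"

definition torus_int :: "(real^2 \<Rightarrow> 'b::euclidean_space) \<Rightarrow> 'b" where
  "torus_int g = integral (cbox (vec 0) (vec 1)) g"

definition F_sol :: "(real^2 \<Rightarrow> real^2) set" where
  "F_sol = {p. (\<forall>i. (\<lambda>x. p x $ i) \<in> Cinf_T2) \<and> (\<forall>x. div2 p x = 0) \<and> torus_int p = 0}"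

definition qD :: "(real^2 \<Rightarrow> real) \<Rightarrow> real^2 \<Rightarrow> real" where
  "qD W l = (INF f\<in>Cinf_T2. torus_int (\<lambda>x. (norm (l - grad f x))\<^sup>2 * exp (-2 * W x))
                            / torus_int (\<lambda>x. exp (-2 * W x)))"

definition qQ :: "(real^2 \<Rightarrow> real) \<Rightarrow> real^2 \<Rightarrow> real" where
  "qQ U l = (INF p\<in>F_sol. torus_int (\<lambda>x. (norm (l - p x))\<^sup>2 * exp (2 * U x))
                            / torus_int (\<lambda>x. exp (2 * U x)))"

definition Dmat :: "(real^2 \<Rightarrow> real) \<Rightarrow> real^2^2" where
  "Dmat W = (THE M. transpose M = M \<and> (\<forall>l. l \<bullet> (M *v l) = qD W l))"

definition Qmat :: "(real^2 \<Rightarrow> real) \<Rightarrow> real^2^2" where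
  "Qmat U = (THE M. transpose M = M \<and> (\<forall>l. l \<bullet> (M *v l) = qQ U l))"

definition Pmat :: "real^2^2" where
  "Pmat = (\<chi> i j. if i = 1 \<and> j = 2 then -1 else if i = 2 \<and> j = 1 then 1 else 0)"

end

theory Submission
  imports Defs
begin


lemma smooth_Ck: "smooth f \<Longrightarrow> Ck k f" by (simp add: smooth_def)

lemma smooth_differentiable: "smooth f \<Longrightarrow> f differentiable (at x)"
  using smooth_Ck[of f 1] by simp

lemma smooth_cont: "smooth f \<Longrightarrow> continuous_on UNIV f"
  using smooth_Ck[of f 0] by simp

lemma smooth_partial: "smooth f \<Longrightarrow> smooth (partial i f)"
  unfolding smooth_def by (metis Ck.simps(2))

lemma vec2_expand: "(h::real^2) = h$1 *\<^sub>R axis 1 1 + h$2 *\<^sub>R axis 2 1"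
  by (simp add: vec_eq_iff forall_2 axis_def)

lemma inner2: "(a::real^2) \<bullet> b = a$1 * b$1 + a$2 * b$2"
  by (simp add: inner_vec_def sum_2)

lemma differentiable_has_grad:
  assumes "f differentiable (at x)"
  shows "(f has_derivative (\<lambda>h. grad f x \<bullet> h)) (at x)"
proof -
  let ?D = "frechet_derivative f (at x)"
  have d: "(f has_derivative ?D) (at x)" using assms frechet_derivative_works by blast
  then have lin: "linear ?D" using has_derivative_linear by blast
  have "?D h = grad f x \<bullet> h" for h
  proof -
    have "?D h = ?D (h$1 *\<^sub>R axis 1 1 + h$2 *\<^sub>R axis 2 1)" using vec2_expand[of h] by metis
    also have "\<dots> = h$1 * ?D (axis 1 1) + h$2 * ?D (axis 2 1)"
      using lin by (simp add: linear_add linear_scale)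
    also have "\<dots> = grad f x \<bullet> h" by (simp add: inner2 grad_def partial_def)
    finally show ?thesis .
  qed
  then have "?D = (\<lambda>h. grad f x \<bullet> h)" by auto
  then show ?thesis using d by simp
qed

lemma smooth_has_grad: "smooth f \<Longrightarrow> (f has_derivative (\<lambda>h. grad f x \<bullet> h)) (at x)"
  using differentiable_has_grad smooth_differentiable by blast

lemma lin_deriv:
  fixes f g :: "real^2 \<Rightarrow> real"
  assumes "f differentiable (at x)" "g differentiable (at x)"
  shows "((\<lambda>x. a * f x + b * g x) has_derivative
        (\<lambda>h. a * frechet_derivative f (at x) h + b * frechet_derivative g (at x) h)) (at x)"
proof -
  have "(f has_derivative frechet_derivative f (at x)) (at x)"
       "(g has_derivative frechet_derivative g (at x)) (at x)"
    using assms frechet_derivative_works by blast+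
  then show ?thesis
    by (auto intro!: derivative_eq_intros)
qed

lemma partial_lin:
  assumes "\<forall>x. f differentiable (at x)" "\<forall>x. g differentiable (at x)"
  shows "partial i (\<lambda>x. a * f x + b * g x) = (\<lambda>x. a * partial i f x + b * partial i g x)"
proof
  fix x
  show "partial i (\<lambda>x. a * f x + b * g x) x = a * partial i f x + b * partial i g x"
  proof -
    have "((\<lambda>x. a * f x + b * g x) has_derivative
        (\<lambda>h. a * frechet_derivative f (at x) h + b * frechet_derivative g (at x) h)) (at x)"
      using lin_deriv assms by blast
    then have "frechet_derivative (\<lambda>x. a * f x + b * g x) (at x) =
        (\<lambda>h. a * frechet_derivative f (at x) h + b * frechet_derivative g (at x) h)"
      by (rule frechet_derivative_at[symmetric])
    then show ?thesis unfolding partial_def by simp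
  qed
qed

lemma Ck_lin: "Ck k f \<Longrightarrow> Ck k g \<Longrightarrow> Ck k (\<lambda>x. a * f x + b * g x)"
proof (induction k arbitrary: f g)
  case 0
  then show ?case by (auto intro!: continuous_intros)
next
  case (Suc k)
  have d: "\<forall>x. f differentiable (at x)" "\<forall>x. g differentiable (at x)"
    using Suc.prems by (auto simp only: Ck.simps)
  have c: "continuous_on UNIV f" "continuous_on UNIV g"
    using Suc.prems by (auto simp only: Ck.simps)
  have pf: "Ck k (partial i f)" "Ck k (partial i g)" for i
    using Suc.prems by (auto simp only: Ck.simps)
  have "(\<lambda>x. a * f x + b * g x) differentiable (at x)" for x
    using lin_deriv[of f x g a b] d unfolding differentiable_def by blast
  moreover have "continuous_on UNIV (\<lambda>x. a * f x + b * g x)"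
    by (intro continuous_intros c)
  moreover have "Ck k (partial i (\<lambda>x. a * f x + b * g x))" for i
    unfolding partial_lin[OF d] by (rule Suc.IH[OF pf])
  ultimately show ?case by (simp only: Ck.simps) blast
qed

lemma smooth_lin: "smooth f \<Longrightarrow> smooth g \<Longrightarrow> smooth (\<lambda>x. a * f x + b * g x)"
  by (simp add: smooth_def Ck_lin)


lemma periodic_partial:
  assumes "periodic f" "\<forall>x. f differentiable (at x)"
  shows "periodic (partial i f)"
  unfolding periodic_def
proof (intro allI)
  fix x j
  let ?a = "axis j 1 :: real^2"
  let ?D = "frechet_derivative f (at (x + ?a))"
  have d: "(f has_derivative ?D) (at (x + ?a))" using assms(2) frechet_derivative_works by blast
  have t: "((\<lambda>y. y + ?a) has_derivative (\<lambda>h. h)) (at x)"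
    by (auto intro!: derivative_eq_intros)
  have "((\<lambda>y. f (y + ?a)) has_derivative (\<lambda>h. ?D h)) (at x)"
    using has_derivative_compose[OF t, of f ?D] d by simp
  moreover have "(\<lambda>y. f (y + ?a)) = f" using assms(1) unfolding periodic_def by auto
  ultimately have "(f has_derivative ?D) (at x)" by simp
  then have "frechet_derivative f (at x) = ?D" by (rule frechet_derivative_at[symmetric])
  then show "partial i f (x + ?a) = partial i f x" unfolding partial_def by simp
qed

lemma Cinf_partial: "f \<in> Cinf_T2 \<Longrightarrow> partial i f \<in> Cinf_T2"
  unfolding Cinf_T2_def using periodic_partial smooth_partial smooth_differentiable by blast

lemma Cinf_lin: "f \<in> Cinf_T2 \<Longrightarrow> g \<in> Cinf_T2 \<Longrightarrow> (\<lambda>x. a * f x + b * g x) \<in> Cinf_T2"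
  unfolding Cinf_T2_def periodic_def by (auto intro: smooth_lin)

lemma partial_const: "partial i (\<lambda>x. c) = (\<lambda>x. 0)"
proof
  fix x
  have "((\<lambda>x::real^2. c) has_derivative (\<lambda>h. 0)) (at x)" by simp
  then have "frechet_derivative (\<lambda>x::real^2. c) (at x) = (\<lambda>h. 0)" by (rule frechet_derivative_at[symmetric])
  then show "partial i (\<lambda>x. c) x = 0" unfolding partial_def by simp
qed

lemma Ck_const: "Ck k (\<lambda>x. c)"
proof (induction k arbitrary: c)
  case 0 then show ?case by simp
next
  case (Suc k)
  have "(\<lambda>x::real^2. c) differentiable (at x)" for x by simp
  moreover have "Ck k (partial i (\<lambda>x. c))" for i unfolding partial_const by (rule Suc.IH)
  ultimately show ?case by (simp only: Ck.simps) (auto intro: continuous_intros)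
qed

lemma Cinf_const: "(\<lambda>x. c) \<in> Cinf_T2"
  unfolding Cinf_T2_def smooth_def periodic_def by (simp add: Ck_const)

lemma grad_lin:
  assumes "smooth f" "smooth g"
  shows "grad (\<lambda>x. a * f x + b * g x) x = a *\<^sub>R grad f x + b *\<^sub>R grad g x"
  using assms smooth_differentiable
  by (simp add: grad_def partial_lin vec_eq_iff)

lemma grad_const: "grad (\<lambda>x. c) x = 0"
proof -
  have "((\<lambda>x::real^2. c) has_derivative (\<lambda>h. 0)) (at x)" by simp
  then have "frechet_derivative (\<lambda>x::real^2. c) (at x) = (\<lambda>h. 0)" by (rule frechet_derivative_at[symmetric])
  then show ?thesis by (simp add: grad_def partial_def vec_eq_iff)
qed

lemma grad_inner_axis: "grad f x \<bullet> axis i 1 = partial i f x"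
  by (simp add: inner_axis grad_def)

lemma line_deriv:
  assumes "smooth f"
  shows "((\<lambda>s. f (x + s *\<^sub>R v)) has_real_derivative (grad f (x + s *\<^sub>R v) \<bullet> v)) (at s within S)"
proof -
  have l: "((\<lambda>s. x + s *\<^sub>R v) has_derivative (\<lambda>t. t *\<^sub>R v)) (at s within S)"
    by (auto intro!: derivative_eq_intros)
  have "((\<lambda>s. f (x + s *\<^sub>R v)) has_derivative (\<lambda>t. grad f (x + s *\<^sub>R v) \<bullet> (t *\<^sub>R v))) (at s within S)"
    using has_derivative_compose[OF l smooth_has_grad[OF assms]] by simp
  then show ?thesis
    unfolding has_field_derivative_def by (simp add: mult.commute[of _ "grad f (x + s *\<^sub>R v) \<bullet> v"])
qed

lemma line_deriv_axis:
  assumes "smooth f"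
  shows "((\<lambda>s. f (x + s *\<^sub>R axis i 1)) has_real_derivative partial i f (x + s *\<^sub>R axis i 1)) (at s within S)"
  using line_deriv[OF assms, of x "axis i 1"] by (simp add: grad_inner_axis)


lemma smooth_cont_comp:
  assumes "smooth f" "continuous_on S g"
  shows "continuous_on S (\<lambda>t. f (g t))"
  using continuous_on_compose2[OF smooth_cont[OF assms(1)] assms(2)] by simp

lemma ftc_line:
  assumes "smooth f" "0 \<le> b"
  shows "integral {0..b} (\<lambda>t. partial i f (p + t *\<^sub>R axis i 1)) = f (p + b *\<^sub>R axis i 1) - f p"
proof -
  have "((\<lambda>t. partial i f (p + t *\<^sub>R axis i 1)) has_integral
          (f (p + b *\<^sub>R axis i 1) - f (p + 0 *\<^sub>R axis i 1))) {0..b}"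
    apply (rule fundamental_theorem_of_calculus[OF assms(2)])
    using line_deriv_axis[OF assms(1)] by (simp add: has_real_derivative_iff_has_vector_derivative)
  then show ?thesis by (simp add: integral_unique)
qed

lemma schwarz:
  assumes "smooth f"
  shows "partial 1 (partial 2 f) x = partial 2 (partial 1 f) x"
proof -
  define e1 :: "real^2" where "e1 = axis 1 1"
  define e2 :: "real^2" where "e2 = axis 2 1"
  define x0 where "x0 = x - e2"
  define y where "y a t = x0 + a *\<^sub>R e1 + t *\<^sub>R e2" for a t
  have sf2: "smooth (partial 2 f)" and sf1: "smooth (partial 1 f)"
    and sf12: "smooth (partial 1 (partial 2 f))" using assms smooth_partial by blast+
  have conty: "continuous_on S (\<lambda>z. y (fst z) (snd z))" for S
    unfolding y_def by (auto intro!: continuous_intros)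
  have conty2: "continuous_on S (\<lambda>t. y a t)" for S a
    unfolding y_def by (auto intro!: continuous_intros)
  have G: "integral {0..b} (\<lambda>t. partial 2 f (y a t)) = f (y a b) - f (y a 0)" if "0 \<le> b" for a b
    using ftc_line[OF assms that, of 2 "x0 + a *\<^sub>R e1"] by (simp add: y_def e2_def)
  have step2: "partial 1 f (y 0 b) - partial 1 f (y 0 0) = integral {0..b} (\<lambda>t. partial 1 (partial 2 f) (y 0 t))"
    if b: "0 \<le> b" for b
  proof -
    have "((\<lambda>a. integral (cbox 0 b) (\<lambda>t. partial 2 f (y a t))) has_vector_derivative
            integral (cbox 0 b) (\<lambda>t. partial 1 (partial 2 f) (y 0 t))) (at 0 within UNIV)"
    proof (rule leibniz_rule_vector_derivative)
      fix a t :: real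
      have "((\<lambda>a. partial 2 f ((x0 + t *\<^sub>R e2) + a *\<^sub>R e1)) has_real_derivative
              partial 1 (partial 2 f) ((x0 + t *\<^sub>R e2) + a *\<^sub>R e1)) (at a within UNIV)"
        using line_deriv_axis[OF sf2] by (simp add: e1_def)
      moreover have "(x0 + t *\<^sub>R e2) + a *\<^sub>R e1 = y a t" for a unfolding y_def by (simp add: algebra_simps)
      ultimately show "((\<lambda>a. partial 2 f (y a t)) has_vector_derivative partial 1 (partial 2 f) (y a t)) (at a within UNIV)"
        by (simp add: has_real_derivative_iff_has_vector_derivative)
    next
      fix a :: real
      show "(\<lambda>t. partial 2 f (y a t)) integrable_on cbox 0 b"
        by (rule integrable_continuous) (rule smooth_cont_comp[OF sf2 conty2])
    next
      show "continuous_on (UNIV \<times> cbox 0 b) (\<lambda>(a, t). partial 1 (partial 2 f) (y a t))"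
        using smooth_cont_comp[OF sf12 conty] by (simp add: case_prod_beta)
    qed auto
    moreover have "((\<lambda>a. f (y a b) - f (y a 0)) has_vector_derivative
            partial 1 f (y 0 b) - partial 1 f (y 0 0)) (at 0)"
    proof -
      have h1: "((\<lambda>a. f ((x0 + c *\<^sub>R e2) + a *\<^sub>R e1)) has_real_derivative
              partial 1 f ((x0 + c *\<^sub>R e2) + 0 *\<^sub>R e1)) (at 0)" for c
        using line_deriv_axis[OF assms, of "x0 + c *\<^sub>R e2" 1 0 UNIV] by (simp add: e1_def)
      have h2: "(x0 + c *\<^sub>R e2) + a *\<^sub>R e1 = y a c" for a c unfolding y_def by (simp add: algebra_simps)
      have "((\<lambda>a. f (y a c)) has_real_derivative partial 1 f (y 0 c)) (at 0)" for c
        using h1[of c] by (simp only: h2)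
      then have "((\<lambda>a. f (y a b) - f (y a 0)) has_real_derivative partial 1 f (y 0 b) - partial 1 f (y 0 0)) (at 0)"
        by (intro derivative_intros)
      then show ?thesis by (simp add: has_real_derivative_iff_has_vector_derivative)
    qed
    moreover have "(\<lambda>a. integral (cbox 0 b) (\<lambda>t. partial 2 f (y a t))) = (\<lambda>a. f (y a b) - f (y a 0))"
      using G[OF b] by (simp add: cbox_interval)
    ultimately show ?thesis using vector_derivative_unique_at by (simp add: cbox_interval) blast
  qed
  have d1: "((\<lambda>b. integral {0..b} (\<lambda>t. partial 1 (partial 2 f) (y 0 t))) has_vector_derivative
              partial 1 (partial 2 f) (y 0 1)) (at 1 within {0..2})"
    by (rule integral_has_vector_derivative) (auto intro: smooth_cont_comp[OF sf12 conty2])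
  have d2: "((\<lambda>b. partial 1 f (y 0 b) - partial 1 f (y 0 0)) has_vector_derivative
              partial 2 (partial 1 f) (y 0 1)) (at 1 within {0..2})"
  proof -
    have h: "((\<lambda>b. partial 1 f (y 0 b)) has_real_derivative partial 2 (partial 1 f) (y 0 1)) (at 1 within {0..2})"
      using line_deriv_axis[OF sf1, of x0 2 1 "{0..2}"] by (simp add: y_def e2_def)
    have "((\<lambda>b. partial 1 f (y 0 b) - partial 1 f (y 0 0)) has_real_derivative partial 2 (partial 1 f) (y 0 1) - 0) (at 1 within {0..2})"
      by (rule DERIV_diff[OF h DERIV_const])
    then show ?thesis by (simp add: has_real_derivative_iff_has_vector_derivative)
  qed
  have d1': "((\<lambda>b. partial 1 f (y 0 b) - partial 1 f (y 0 0)) has_vector_derivative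
              partial 1 (partial 2 f) (y 0 1)) (at 1 within {0..2})"
    by (rule has_vector_derivative_transform_within[OF d1, of 1]) (auto simp: step2)
  have at1: "at (1::real) within {0..2} = at 1" by (rule at_within_Icc_at) auto
  have "partial 1 (partial 2 f) (y 0 1) = partial 2 (partial 1 f) (y 0 1)"
    using vector_derivative_unique_at d1' d2 unfolding at1 by blast
  moreover have "y 0 1 = x" by (simp add: y_def x0_def)
  ultimately show ?thesis by simp
qed


definition g2 :: "real \<times> real \<Rightarrow> real^2" where
  "g2 p = fst p *\<^sub>R axis 1 1 + snd p *\<^sub>R axis 2 1"
definition h2 :: "real^2 \<Rightarrow> real \<times> real" where
  "h2 x = (x$1, x$2)"

lemma one_neq_two [simp]: "(1::2) \<noteq> 2" "(2::2) \<noteq> 1"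
  by simp_all

lemma comp2 [simp]: "(a *\<^sub>R axis 1 1 + b *\<^sub>R axis 2 1 :: real^2)$1 = a"
                    "(a *\<^sub>R axis 1 1 + b *\<^sub>R axis 2 1 :: real^2)$2 = b"
  by (simp_all add: axis_def)

lemma g2_comp [simp]: "g2 p $ 1 = fst p" "g2 p $ 2 = snd p"
  by (simp_all add: g2_def axis_def)

lemma hg2: "h2 (g2 p) = p" by (simp add: h2_def)
lemma gh2: "g2 (h2 x) = x" by (simp add: h2_def g2_def vec2_expand[symmetric])

lemma mem_cbox2: "(x::real^2) \<in> cbox a b \<longleftrightarrow> a$1 \<le> x$1 \<and> x$1 \<le> b$1 \<and> a$2 \<le> x$2 \<and> x$2 \<le> b$2"
  by (auto simp: mem_box_cart forall_2)

lemma mem_cboxP: "(x::real\<times>real) \<in> cbox a b \<longleftrightarrow> fst a \<le> fst x \<and> fst x \<le> fst b \<and> snd a \<le> snd x \<and> snd x \<le> snd b"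
proof -
  have "cbox a b = cbox (fst a, snd a) (fst b, snd b)" by simp
  also have "\<dots> = cbox (fst a) (fst b) \<times> cbox (snd a) (snd b)" by (rule cbox_Pair_eq)
  finally show ?thesis by (cases x) (auto simp: cbox_interval)
qed

lemma g2_image: "g2 ` cbox u v = cbox (g2 u) (g2 v)"
proof
  show "g2 ` cbox u v \<subseteq> cbox (g2 u) (g2 v)"
    by (auto simp: mem_cbox2 mem_cboxP)
  show "cbox (g2 u) (g2 v) \<subseteq> g2 ` cbox u v"
  proof
    fix x assume "x \<in> cbox (g2 u) (g2 v)"
    then have "h2 x \<in> cbox u v" by (auto simp: mem_cbox2 mem_cboxP h2_def)
    then show "x \<in> g2 ` cbox u v" using gh2[of x] by (metis image_eqI)
  qed
qed

lemma h2_image: "h2 ` cbox u v = cbox (h2 u) (h2 v)"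
proof
  show "h2 ` cbox u v \<subseteq> cbox (h2 u) (h2 v)"
    by (auto simp: mem_cbox2 mem_cboxP h2_def)
  show "cbox (h2 u) (h2 v) \<subseteq> h2 ` cbox u v"
  proof
    fix x assume "x \<in> cbox (h2 u) (h2 v)"
    then have "g2 x \<in> cbox u v" by (auto simp: mem_cbox2 mem_cboxP h2_def)
    then show "x \<in> h2 ` cbox u v" using hg2[of x] by (metis image_eqI)
  qed
qed

lemma content_g2: "Henstock_Kurzweil_Integration.content (g2 ` cbox u v) = 1 * Henstock_Kurzweil_Integration.content (cbox u v)"
proof -
  have e: "cbox (g2 u) (g2 v) = {} \<longleftrightarrow> \<not> (fst u \<le> fst v \<and> snd u \<le> snd v)"
    using interval_ne_empty_cart(1)[of "g2 u" "g2 v"] by (auto simp: forall_2)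
  have "Henstock_Kurzweil_Integration.content (cbox u v) = Henstock_Kurzweil_Integration.content (cbox (fst u, snd u) (fst v, snd v))" by simp
  also have "\<dots> = Henstock_Kurzweil_Integration.content {fst u..fst v} * Henstock_Kurzweil_Integration.content {snd u..snd v}"
    by (subst content_Pair) (simp only: cbox_interval)
  finally have c: "Henstock_Kurzweil_Integration.content (cbox u v) = Henstock_Kurzweil_Integration.content {fst u..fst v} * Henstock_Kurzweil_Integration.content {snd u..snd v}" .
  show ?thesis
    unfolding g2_image content_cbox_if_cart c using e by (auto simp: sum_2 UNIV_2)
qed

lemma torus_int_iter:
  fixes F :: "real^2 \<Rightarrow> real"
  assumes "continuous_on UNIV F"
  shows "torus_int F = integral {0..1} (\<lambda>a. integral {0..1} (\<lambda>b. F (a *\<^sub>R axis 1 1 + b *\<^sub>R axis 2 1)))"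
proof -
  have int: "(F has_integral torus_int F) (cbox (vec 0) (vec 1))"
    unfolding torus_int_def
    by (rule integrable_integral, rule integrable_continuous, rule continuous_on_subset[OF assms]) auto
  have cg: "continuous (at x) g2" for x unfolding g2_def by (auto intro!: continuous_intros)
  have "((\<lambda>x. F (g2 x)) has_integral (1 / 1) *\<^sub>R torus_int F) (h2 ` cbox (vec 0) (vec 1))"
  proof (rule has_integral_twiddle[OF _ hg2 gh2 cg _ _ content_g2 int])
    show "\<exists>w z. g2 ` cbox u v = cbox w z" for u v using g2_image by blast
    show "\<exists>w z. h2 ` cbox u v = cbox w z" for u v using h2_image by blast
  qed simp
  moreover have "h2 ` cbox (vec 0) (vec 1) = cbox (0,0) (1,1)"
    unfolding h2_image by (simp add: h2_def)
  ultimately have "torus_int F = integral (cbox (0,0) (1,1)) (\<lambda>x. F (g2 x))"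
    by (simp add: integral_unique)
  also have "\<dots> = integral (cbox 0 1) (\<lambda>a. integral (cbox 0 1) (\<lambda>b. F (g2 (a, b))))"
    by (rule integral_prod_continuous)
       (auto intro!: continuous_on_compose2[OF assms] continuous_intros simp: g2_def)
  finally show ?thesis by (simp add: g2_def cbox_interval)
qed

lemma torus_int_iter':
  fixes F :: "real^2 \<Rightarrow> real"
  assumes "continuous_on UNIV F"
  shows "torus_int F = integral {0..1} (\<lambda>b. integral {0..1} (\<lambda>a. F (a *\<^sub>R axis 1 1 + b *\<^sub>R axis 2 1)))"
proof -
  have "integral (cbox 0 1) (\<lambda>a. integral (cbox 0 1) (\<lambda>b. F (a *\<^sub>R axis 1 1 + b *\<^sub>R axis 2 1))) =
        integral (cbox 0 1) (\<lambda>b. integral (cbox 0 1) (\<lambda>a. F (a *\<^sub>R axis 1 1 + b *\<^sub>R axis 2 1)))"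
    by (rule integral_swap_continuous)
       (auto intro!: continuous_on_compose2[OF assms] continuous_intros simp: case_prod_beta)
  then show ?thesis using torus_int_iter[OF assms] by (simp add: cbox_interval)
qed


lemma smooth_partial_cont: "smooth f \<Longrightarrow> continuous_on UNIV (partial i f)"
  using smooth_cont smooth_partial by blast

lemma torus_int_partial_zero:
  assumes "f \<in> Cinf_T2"
  shows "torus_int (partial i f) = 0"
proof -
  have sf: "smooth f" and pf: "periodic f" using assms by (auto simp: Cinf_T2_def)
  have c: "continuous_on UNIV (partial i f)" by (rule smooth_partial_cont[OF sf])
  consider "i = 1" | "i = 2" using exhaust_2 by blast
  then show ?thesis
  proof cases
    case 1
    have "integral {0..1} (\<lambda>a. partial i f (a *\<^sub>R axis 1 1 + b *\<^sub>R axis 2 1)) = 0" for b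
    proof -
      have "integral {0..1} (\<lambda>a. partial 1 f (b *\<^sub>R axis 2 1 + a *\<^sub>R axis 1 1)) =
            f (b *\<^sub>R axis 2 1 + 1 *\<^sub>R axis 1 1) - f (b *\<^sub>R axis 2 1)"
        by (rule ftc_line[OF sf]) simp
      also have "\<dots> = 0" using pf unfolding periodic_def by simp
      finally show ?thesis using 1 by (simp add: add.commute)
    qed
    then show ?thesis using torus_int_iter'[OF c] by simp
  next
    case 2
    have "integral {0..1} (\<lambda>b. partial i f (a *\<^sub>R axis 1 1 + b *\<^sub>R axis 2 1)) = 0" for a
    proof -
      have "integral {0..1} (\<lambda>b. partial 2 f (a *\<^sub>R axis 1 1 + b *\<^sub>R axis 2 1)) =
            f (a *\<^sub>R axis 1 1 + 1 *\<^sub>R axis 2 1) - f (a *\<^sub>R axis 1 1)"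
        by (rule ftc_line[OF sf]) simp
      also have "\<dots> = 0" using pf unfolding periodic_def by simp
      finally show ?thesis using 2 by simp
    qed
    then show ?thesis using torus_int_iter[OF c] by simp
  qed
qed

definition rot :: "(real^2 \<Rightarrow> real) \<Rightarrow> real^2 \<Rightarrow> real^2" where
  "rot f x = (\<chi> j. if j = 1 then partial 2 f x else - partial 1 f x)"

lemma Cinf_neg: "h \<in> Cinf_T2 \<Longrightarrow> (\<lambda>x. - h x) \<in> Cinf_T2"
proof -
  assume h: "h \<in> Cinf_T2"
  have "(\<lambda>x. (-1) * h x + 0 * h x) \<in> Cinf_T2" by (rule Cinf_lin[OF h h])
  then show ?thesis by simp
qed

lemma partial_neg: "\<forall>x. h differentiable (at x) \<Longrightarrow> partial i (\<lambda>x. - h x) = (\<lambda>x. - partial i h x)"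
proof -
  assume d: "\<forall>x. h differentiable (at x)"
  have "partial i (\<lambda>x. (-1) * h x + 0 * h x) = (\<lambda>x. (-1) * partial i h x + 0 * partial i h x)"
    by (rule partial_lin[OF d d])
  then show ?thesis by simp
qed

lemma rot_comp: "(\<lambda>x. rot f x $ 1) = partial 2 f" "(\<lambda>x. rot f x $ 2) = (\<lambda>x. - partial 1 f x)"
  by (auto simp: rot_def)

lemma rot_F_sol:
  assumes "f \<in> Cinf_T2"
  shows "rot f \<in> F_sol"
proof -
  have sf: "smooth f" using assms by (auto simp: Cinf_T2_def)
  have comps: "(\<lambda>x. rot f x $ j) \<in> Cinf_T2" for j
    using exhaust_2[of j] Cinf_partial[OF assms] Cinf_neg[OF Cinf_partial[OF assms]]
    by (auto simp: rot_comp)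
  have "div2 (rot f) x = 0" for x
  proof -
    have "div2 (rot f) x = partial 1 (partial 2 f) x + partial 2 (\<lambda>x. - partial 1 f x) x"
      by (simp add: div2_def sum_2 rot_comp)
    also have "\<dots> = partial 1 (partial 2 f) x - partial 2 (partial 1 f) x"
      using smooth_differentiable[OF smooth_partial[OF sf]] by (simp add: partial_neg)
    also have "\<dots> = 0" using schwarz[OF sf] by simp
    finally show ?thesis .
  qed
  moreover have "torus_int (rot f) = 0"
  proof -
    have ci: "continuous_on UNIV (\<lambda>x. rot f x $ j)" for j
      using comps[of j] by (auto simp: Cinf_T2_def intro: smooth_cont)
    have ir: "rot f integrable_on cbox (vec 0) (vec 1)"
    proof -
      have "continuous_on UNIV (\<lambda>x. \<chi> j. rot f x $ j)"
        by (rule continuous_on_vec_lambda) (rule ci)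
      then have "continuous_on UNIV (rot f)" by simp
      then show ?thesis by (rule integrable_continuous[OF continuous_on_subset]) auto
    qed
    have "torus_int (rot f) $ j = 0" for j
    proof -
      have "torus_int (rot f) $ j = torus_int (\<lambda>x. rot f x $ j)"
        unfolding torus_int_def using integral_component_eq_cart[OF ir] by simp
      also have "\<dots> = 0"
        using exhaust_2[of j] torus_int_partial_zero[OF assms, of 2]
          torus_int_partial_zero[OF assms, of 1]
        by (auto simp: rot_comp torus_int_def integral_neg)
      finally show ?thesis .
    qed
    then show ?thesis by (simp add: vec_eq_iff)
  qed
  ultimately show ?thesis using comps by (simp add: F_sol_def)
qed

lemma Pmat_mult: "Pmat *v v = (\<chi> i. if i = 1 then - v$2 else v$1)"
  by (simp add: Pmat_def matrix_vector_mult_def vec_eq_iff sum_2 forall_2)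

lemma grad_rot: "grad f x = Pmat *v rot f x"
  by (simp add: Pmat_mult rot_def grad_def vec_eq_iff forall_2)


definition cc :: "(real^2 \<Rightarrow> real^2) \<Rightarrow> real^2 \<Rightarrow> real \<Rightarrow> real^2" where
  "cc q x t = q (t *\<^sub>R x) + t *\<^sub>R (x$1 *\<^sub>R grad (\<lambda>y. q y $ 1) (t *\<^sub>R x) + x$2 *\<^sub>R grad (\<lambda>y. q y $ 2) (t *\<^sub>R x))"

lemma rad_deriv:
  fixes q :: "real^2 \<Rightarrow> real^2"
  assumes sm: "\<And>i. smooth (\<lambda>y. q y $ i)"
  shows "((\<lambda>x. q (t *\<^sub>R x) \<bullet> x) has_derivative (\<lambda>h. h \<bullet> cc q x t)) (at x within S)"
proof -
  have sc: "((\<lambda>x. t *\<^sub>R x) has_derivative (\<lambda>h. t *\<^sub>R h)) (at x within S)"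
    by (auto intro!: derivative_eq_intros)
  have ci: "((\<lambda>x. q (t *\<^sub>R x) $ i) has_derivative (\<lambda>h. grad (\<lambda>y. q y $ i) (t *\<^sub>R x) \<bullet> (t *\<^sub>R h))) (at x within S)" for i
    using has_derivative_compose[OF sc smooth_has_grad[OF sm[of i]]] by simp
  have ni: "((\<lambda>x. x $ i) has_derivative (\<lambda>h. h $ i)) (at x within S)" for i :: 2
    by (rule bounded_linear_imp_has_derivative[OF bounded_linear_vec_nth])
  have pi: "((\<lambda>x. q (t *\<^sub>R x) $ i * x $ i) has_derivative
      (\<lambda>h. q (t *\<^sub>R x) $ i * h $ i + (grad (\<lambda>y. q y $ i) (t *\<^sub>R x) \<bullet> (t *\<^sub>R h)) * x $ i)) (at x within S)" for i
    by (rule has_derivative_mult[OF ci ni])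
  have "((\<lambda>x. q (t *\<^sub>R x) $ 1 * x $ 1 + q (t *\<^sub>R x) $ 2 * x $ 2) has_derivative
      (\<lambda>h. (q (t *\<^sub>R x) $ 1 * h $ 1 + (grad (\<lambda>y. q y $ 1) (t *\<^sub>R x) \<bullet> (t *\<^sub>R h)) * x $ 1) +
           (q (t *\<^sub>R x) $ 2 * h $ 2 + (grad (\<lambda>y. q y $ 2) (t *\<^sub>R x) \<bullet> (t *\<^sub>R h)) * x $ 2))) (at x within S)"
    by (rule has_derivative_add[OF pi pi])
  moreover have "(\<lambda>x. q (t *\<^sub>R x) $ 1 * x $ 1 + q (t *\<^sub>R x) $ 2 * x $ 2) = (\<lambda>x. q (t *\<^sub>R x) \<bullet> x)"
    by (simp add: inner2)
  moreover have "(\<lambda>h. (q (t *\<^sub>R x) $ 1 * h $ 1 + (grad (\<lambda>y. q y $ 1) (t *\<^sub>R x) \<bullet> (t *\<^sub>R h)) * x $ 1) +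
           (q (t *\<^sub>R x) $ 2 * h $ 2 + (grad (\<lambda>y. q y $ 2) (t *\<^sub>R x) \<bullet> (t *\<^sub>R h)) * x $ 2)) =
         (\<lambda>h. h \<bullet> cc q x t)"
    by (rule ext) (simp add: inner2 cc_def algebra_simps)
  ultimately show ?thesis by simp
qed

lemma grad_cont:
  assumes "smooth f" shows "continuous_on S (grad f)"
proof -
  have "continuous_on S (\<lambda>x. \<chi> i. partial i f x)"
    by (rule continuous_on_vec_lambda, rule continuous_on_subset[OF smooth_partial_cont[OF assms]]) auto
  then show ?thesis unfolding grad_def[abs_def] by simp
qed

lemma vec_cont:
  fixes q :: "real^2 \<Rightarrow> real^2"
  assumes sm: "\<And>i. smooth (\<lambda>y. q y $ i)"
  shows "continuous_on S q"
proof -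
  have "continuous_on S (\<lambda>x. \<chi> i. q x $ i)"
    by (rule continuous_on_vec_lambda, rule continuous_on_subset[OF smooth_cont[OF sm]]) auto
  then show ?thesis by simp
qed

lemma cc_cont:
  fixes q :: "real^2 \<Rightarrow> real^2"
  assumes sm: "\<And>i. smooth (\<lambda>y. q y $ i)"
  shows "continuous_on S (\<lambda>z. cc q (fst z) (snd z))"
proof -
  have cq: "continuous_on UNIV q" by (rule vec_cont[OF sm])
  have cg: "continuous_on UNIV (grad (\<lambda>y. q y $ i))" for i by (rule grad_cont[OF sm])
  show ?thesis unfolding cc_def
    by (intro continuous_intros continuous_on_compose2[OF cq] continuous_on_compose2[OF cg]) auto
qed


lemma cc_comp:
  fixes q :: "real^2 \<Rightarrow> real^2"
  assumes curl: "partial 2 (\<lambda>y. q y $ 1) = partial 1 (\<lambda>y. q y $ 2)"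
  shows "cc q x t $ j = q (t *\<^sub>R x) $ j + t * (grad (\<lambda>y. q y $ j) (t *\<^sub>R x) \<bullet> x)"
proof -
  have c: "partial 2 (\<lambda>y. q y $ 1) z = partial 1 (\<lambda>y. q y $ 2) z" for z using curl by simp
  show ?thesis
    using exhaust_2[of j] c[of "t *\<^sub>R x"]
    by (auto simp: cc_def inner2 grad_def algebra_simps)
qed

lemma cc_integral:
  fixes q :: "real^2 \<Rightarrow> real^2"
  assumes sm: "\<And>i. smooth (\<lambda>y. q y $ i)"
    and curl: "partial 2 (\<lambda>y. q y $ 1) = partial 1 (\<lambda>y. q y $ 2)"
  shows "((\<lambda>t. cc q x t $ j) has_integral q x $ j) {0..1}"
proof -
  let ?f = "\<lambda>y. q y $ j"
  have "((\<lambda>t. t * ?f (0 + t *\<^sub>R x)) has_real_derivative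
          (1 * ?f (0 + t *\<^sub>R x) + (grad ?f (0 + t *\<^sub>R x) \<bullet> x) * t)) (at t within {0..1})" for t
    by (rule DERIV_mult[OF DERIV_ident line_deriv[OF sm]])
  then have "((\<lambda>t. t * ?f (t *\<^sub>R x)) has_vector_derivative cc q x t $ j) (at t within {0..1})" for t
    by (simp add: cc_comp[OF curl] has_real_derivative_iff_has_vector_derivative mult.commute)
  then have "((\<lambda>t. cc q x t $ j) has_integral (1 * ?f (1 *\<^sub>R x) - 0 * ?f (0 *\<^sub>R x))) {0..1}"
    by (intro fundamental_theorem_of_calculus) auto
  then show ?thesis by simp
qed

lemma rad_potential_deriv:
  fixes q :: "real^2 \<Rightarrow> real^2"
  assumes sm: "\<And>i. smooth (\<lambda>y. q y $ i)"
    and curl: "partial 2 (\<lambda>y. q y $ 1) = partial 1 (\<lambda>y. q y $ 2)"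
  shows "((\<lambda>x. integral {0..1} (\<lambda>t. q (t *\<^sub>R x) \<bullet> x)) has_derivative (\<lambda>h. q x \<bullet> h)) (at x)"
proof -
  have cq: "continuous_on UNIV q" by (rule vec_cont[OF sm])
  have cB: "continuous_on S (\<lambda>z. blinfun_inner_left (cc q (fst z) (snd z)))" for S
    by (rule continuous_on_compose2[OF linear_continuous_on[OF bounded_linear_blinfun_inner_left] cc_cont[OF sm]]) auto
  have L: "((\<lambda>x. integral (cbox 0 1) (\<lambda>t. q (t *\<^sub>R x) \<bullet> x)) has_derivative
          integral (cbox 0 1) (\<lambda>t. blinfun_inner_left (cc q x t))) (at x within UNIV)"
  proof (rule leibniz_rule[where f = "\<lambda>x t. q (t *\<^sub>R x) \<bullet> x" and fx = "\<lambda>x t. blinfun_inner_left (cc q x t)"])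
    fix x :: "real^2" and t :: real
    show "((\<lambda>x. q (t *\<^sub>R x) \<bullet> x) has_derivative blinfun_apply (blinfun_inner_left (cc q x t))) (at x within UNIV)"
      using rad_deriv[OF sm, of t x UNIV] by simp
  next
    fix x :: "real^2"
    show "(\<lambda>t. q (t *\<^sub>R x) \<bullet> x) integrable_on cbox 0 1"
      by (rule integrable_continuous)
         (intro continuous_intros continuous_on_compose2[OF cq]; auto)
  next
    show "continuous_on (UNIV \<times> cbox 0 1) (\<lambda>(x, t). blinfun_inner_left (cc q x t))"
      using cB by (simp add: case_prod_beta)
  qed auto
  have "blinfun_apply (integral (cbox 0 1) (\<lambda>t. blinfun_inner_left (cc q x t))) h = q x \<bullet> h" for h
  proof -
    have "continuous_on (cbox 0 1) (\<lambda>t. (\<lambda>z. blinfun_inner_left (cc q (fst z) (snd z))) (x, t))"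
      by (rule continuous_on_compose2[OF cB[of UNIV]]) (auto intro!: continuous_intros)
    then have ib: "(\<lambda>t. blinfun_inner_left (cc q x t)) integrable_on cbox 0 1"
      by (auto simp: cbox_interval intro: integrable_continuous_real)
    have "blinfun_apply (integral (cbox 0 1) (\<lambda>t. blinfun_inner_left (cc q x t))) h =
          integral (cbox 0 1) (\<lambda>t. h \<bullet> cc q x t)"
      using blinfun_apply_integral[OF ib] by simp
    also have "\<dots> = q x \<bullet> h"
    proof -
      have "((\<lambda>t. h$1 * cc q x t $ 1 + h$2 * cc q x t $ 2) has_integral (h$1 * q x $ 1 + h$2 * q x $ 2)) {0..1}"
        by (intro has_integral_add has_integral_mult_right cc_integral[OF sm curl])
      then show ?thesis by (simp add: inner2 cbox_interval integral_unique algebra_simps)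
    qed
    finally show ?thesis .
  qed
  then have "blinfun_apply (integral (cbox 0 1) (\<lambda>t. blinfun_inner_left (cc q x t))) = (\<lambda>h. q x \<bullet> h)"
    by (rule ext)
  then show ?thesis using L by (simp add: cbox_interval)
qed


lemma potential_general:
  fixes q :: "real^2 \<Rightarrow> real^2"
  assumes cinf: "\<And>i. (\<lambda>y. q y $ i) \<in> Cinf_T2"
    and curl: "partial 2 (\<lambda>y. q y $ 1) = partial 1 (\<lambda>y. q y $ 2)"
    and mean: "\<And>i. torus_int (\<lambda>y. q y $ i) = 0"
  shows "\<exists>g\<in>Cinf_T2. \<forall>x. grad g x = q x"
proof -
  have sm: "smooth (\<lambda>y. q y $ i)" for i using cinf by (auto simp: Cinf_T2_def)
  have pq: "periodic (\<lambda>y. q y $ i)" for i using cinf by (auto simp: Cinf_T2_def)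
  define g where "g x = integral {0..1} (\<lambda>t. q (t *\<^sub>R x) \<bullet> x)" for x
  have D: "(g has_derivative (\<lambda>h. q x \<bullet> h)) (at x)" for x
    unfolding g_def[abs_def] by (rule rad_potential_deriv[OF sm curl])
  have pg: "partial i g = (\<lambda>y. q y $ i)" for i
  proof
    fix x
    have "frechet_derivative g (at x) = (\<lambda>h. q x \<bullet> h)" by (rule frechet_derivative_at[OF D, symmetric])
    then show "partial i g x = q x $ i" by (simp add: partial_def inner_axis)
  qed
  have dg: "g differentiable (at x)" for x using D unfolding differentiable_def by blast
  have cg: "continuous_on UNIV g"
    using D has_derivative_continuous continuous_at_imp_continuous_on by blast
  have smg: "smooth g"
    unfolding smooth_def
  proof
    fix k show "Ck k g"
    proof (cases k)
      case 0 then show ?thesis using cg by simp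
    next
      case (Suc m)
      have "Ck m (partial i g)" for i unfolding pg using sm smooth_Ck by blast
      then show ?thesis using Suc dg cg by simp
    qed
  qed
  have gg: "grad g x = q x" for x by (simp add: grad_def pg vec_eq_iff)
  have qper: "q (x + axis j 1) = q x" for x j
    using pq unfolding periodic_def by (simp add: vec_eq_iff)
  have dconst: "\<exists>c. \<forall>x. g (x + axis j 1) - g x = c" for j
  proof -
    have "((\<lambda>x. g (x + axis j 1) - g x) has_derivative (\<lambda>h. 0)) (at x within UNIV)" for x
    proof -
      have t: "((\<lambda>y. y + axis j 1) has_derivative (\<lambda>h. h)) (at x)"
        by (auto intro!: derivative_eq_intros)
      have "((\<lambda>y. g (y + axis j 1)) has_derivative (\<lambda>h. q (x + axis j 1) \<bullet> h)) (at x)"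
        using has_derivative_compose[OF t D] by simp
      then have "((\<lambda>x. g (x + axis j 1) - g x) has_derivative (\<lambda>h. q (x + axis j 1) \<bullet> h - q x \<bullet> h)) (at x)"
        by (rule has_derivative_diff[OF _ D])
      then show ?thesis by (simp add: qper)
    qed
    then show ?thesis using has_derivative_zero_constant[of UNIV] by auto
  qed
  have pergj: "g (x + axis j 1) = g x" for x j
  proof -
    obtain c where c: "\<And>x. g (x + axis j 1) - g x = c" using dconst[of j] by blast
    have "c = 0"
    proof (cases "j = 1")
      case True
      have "integral {0..1} (\<lambda>a. q (a *\<^sub>R axis 1 1 + b *\<^sub>R axis 2 1) $ 1) = c" for b
      proof -
        have "integral {0..1} (\<lambda>a. partial 1 g (b *\<^sub>R axis 2 1 + a *\<^sub>R axis 1 1)) =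
              g (b *\<^sub>R axis 2 1 + 1 *\<^sub>R axis 1 1) - g (b *\<^sub>R axis 2 1)"
          by (rule ftc_line[OF smg]) simp
        also have "\<dots> = c" using c[of "b *\<^sub>R axis 2 1"] True by simp
        finally show ?thesis by (simp add: pg add.commute)
      qed
      moreover have "continuous_on UNIV (\<lambda>y. q y $ 1)" by (rule smooth_cont[OF sm])
      ultimately have "torus_int (\<lambda>y. q y $ 1) = c" using torus_int_iter' by simp
      then show ?thesis using mean by simp
    next
      case False
      then have j2: "j = 2" using exhaust_2 by blast
      have "integral {0..1} (\<lambda>b. q (a *\<^sub>R axis 1 1 + b *\<^sub>R axis 2 1) $ 2) = c" for a
      proof -
        have "integral {0..1} (\<lambda>b. partial 2 g (a *\<^sub>R axis 1 1 + b *\<^sub>R axis 2 1)) =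
              g (a *\<^sub>R axis 1 1 + 1 *\<^sub>R axis 2 1) - g (a *\<^sub>R axis 1 1)"
          by (rule ftc_line[OF smg]) simp
        also have "\<dots> = c" using c[of "a *\<^sub>R axis 1 1"] j2 by simp
        finally show ?thesis by (simp add: pg)
      qed
      moreover have "continuous_on UNIV (\<lambda>y. q y $ 2)" by (rule smooth_cont[OF sm])
      ultimately have "torus_int (\<lambda>y. q y $ 2) = c" using torus_int_iter by simp
      then show ?thesis using mean by simp
    qed
    then show ?thesis using c[of x] by simp
  qed
  have "g \<in> Cinf_T2" using smg pergj by (simp add: Cinf_T2_def periodic_def)
  then show ?thesis using gg by blast
qed


lemma F_sol_potential:
  assumes "p \<in> F_sol"
  shows "\<exists>g\<in>Cinf_T2. \<forall>x. grad g x = Pmat *v p x"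
proof -
  have pc: "(\<lambda>x. p x $ i) \<in> Cinf_T2" for i using assms by (simp add: F_sol_def)
  have dv: "div2 p x = 0" for x using assms by (simp add: F_sol_def)
  have tp: "torus_int p = 0" using assms by (simp add: F_sol_def)
  have sm: "smooth (\<lambda>x. p x $ i)" for i using pc by (simp add: Cinf_T2_def)
  let ?q = "\<lambda>x. Pmat *v p x"
  have q1: "(\<lambda>y. ?q y $ 1) = (\<lambda>y. - p y $ 2)" and q2: "(\<lambda>y. ?q y $ 2) = (\<lambda>y. p y $ 1)"
    by (simp_all add: Pmat_mult)
  have cinf: "(\<lambda>y. ?q y $ i) \<in> Cinf_T2" for i
    using exhaust_2[of i] pc Cinf_neg[OF pc] by (auto simp: q1 q2)
  have curl: "partial 2 (\<lambda>y. ?q y $ 1) = partial 1 (\<lambda>y. ?q y $ 2)"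
  proof -
    have "partial 2 (\<lambda>y. - p y $ 2) = (\<lambda>y. - partial 2 (\<lambda>y. p y $ 2) y)"
      using smooth_differentiable[OF sm] by (simp add: partial_neg)
    also have "\<dots> = partial 1 (\<lambda>y. p y $ 1)"
    proof
      fix x show "- partial 2 (\<lambda>y. p y $ 2) x = partial 1 (\<lambda>y. p y $ 1) x"
        using dv[of x] by (simp add: div2_def sum_2)
    qed
    finally show ?thesis by (simp only: q1 q2)
  qed
  have ip: "p integrable_on cbox (vec 0) (vec 1)"
    by (rule integrable_continuous, rule vec_cont[OF sm])
  have pm: "torus_int (\<lambda>y. p y $ i) = 0" for i
    using integral_component_eq_cart[OF ip, of i] tp by (simp add: torus_int_def)
  have mean: "torus_int (\<lambda>y. ?q y $ i) = 0" for i
    using exhaust_2[of i] pm by (auto simp: q1 q2 torus_int_def integral_neg)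
  show ?thesis by (rule potential_general[OF cinf curl mean])
qed

lemma Pnorm: "norm (Pmat *v w) = norm w"
  by (simp add: norm_eq_sqrt_inner inner2 Pmat_mult algebra_simps)

lemma Pnorm_diff: "norm (Pmat *v l - Pmat *v v) = norm (l - v)"
  by (metis Pnorm matrix_vector_mult_diff_distrib)

lemma qQ_eq: "qQ U l = qD (\<lambda>x. - U x) (Pmat *v l)"
proof -
  define Z where "Z = torus_int (\<lambda>x. exp (2 * U x))"
  let ?A = "(\<lambda>p. torus_int (\<lambda>x. (norm (l - p x))\<^sup>2 * exp (2 * U x)) / Z) ` F_sol"
  let ?B = "(\<lambda>f. torus_int (\<lambda>x. (norm (Pmat *v l - grad f x))\<^sup>2 * exp (2 * U x)) / Z) ` Cinf_T2"
  have "?A = ?B"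
  proof
    show "?A \<subseteq> ?B"
    proof
      fix z assume "z \<in> ?A"
      then obtain p where p: "p \<in> F_sol" and z: "z = torus_int (\<lambda>x. (norm (l - p x))\<^sup>2 * exp (2 * U x)) / Z" by blast
      obtain g where g: "g \<in> Cinf_T2" "\<And>x. grad g x = Pmat *v p x" using F_sol_potential[OF p] by blast
      have "z = torus_int (\<lambda>x. (norm (Pmat *v l - grad g x))\<^sup>2 * exp (2 * U x)) / Z"
        unfolding z g(2) Pnorm_diff ..
      then show "z \<in> ?B" using g(1) by blast
    qed
    show "?B \<subseteq> ?A"
    proof
      fix z assume "z \<in> ?B"
      then obtain f where f: "f \<in> Cinf_T2" and z: "z = torus_int (\<lambda>x. (norm (Pmat *v l - grad f x))\<^sup>2 * exp (2 * U x)) / Z" by blast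
      have "z = torus_int (\<lambda>x. (norm (l - rot f x))\<^sup>2 * exp (2 * U x)) / Z"
        unfolding z grad_rot Pnorm_diff ..
      then show "z \<in> ?A" using rot_F_sol[OF f] by blast
    qed
  qed
  then show ?thesis unfolding qQ_def qD_def Z_def by simp
qed


lemma additive_bounded_linear:
  fixes k :: "real \<Rightarrow> real"
  assumes add: "\<And>s t. k (s + t) = k s + k t"
    and bnd: "\<And>s. s \<in> {0..1} \<Longrightarrow> \<bar>k s\<bar> \<le> M"
  shows "k s = s * k 1"
proof -
  define h where "h s = k s - s * k 1" for s
  have hadd: "h (s + t) = h s + h t" for s t unfolding h_def using add by (simp add: algebra_simps)
  have h1: "h 1 = 0" unfolding h_def by simp
  have h0: "h 0 = 0" using hadd[of 0 0] by simp
  have hneg: "h (- s) = - h s" for s using hadd[of s "- s"] h0 by simp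
  have hnat: "h (of_nat n) = 0" for n
  proof (induction n)
    case 0 then show ?case using h0 by simp
  next
    case (Suc n)
    have "h (of_nat (Suc n)) = h (of_nat n + 1)" by (simp add: add.commute)
    also have "\<dots> = h (of_nat n) + h 1" by (rule hadd)
    finally show ?case using Suc h1 by simp
  qed
  have hint: "h (of_int n) = 0" for n
  proof (cases "n \<ge> 0")
    case True
    then have "h (of_int n) = h (of_nat (nat n))" by simp
    then show ?thesis using hnat[of "nat n"] by simp
  next
    case False
    then have "h (of_int n) = h (- of_nat (nat (- n)))" by simp
    then show ?thesis using hnat[of "nat (- n)"] hneg by simp
  qed
  define M' where "M' = M + \<bar>k 1\<bar>"
  have hb01: "\<bar>h s\<bar> \<le> M'" if "s \<in> {0..1}" for s
  proof -
    have "\<bar>h s\<bar> \<le> \<bar>k s\<bar> + \<bar>s * k 1\<bar>" unfolding h_def by (rule abs_triangle_ineq4)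
    moreover have "\<bar>s * k 1\<bar> \<le> \<bar>k 1\<bar>"
    proof -
      have "\<bar>s * k 1\<bar> = \<bar>s\<bar> * \<bar>k 1\<bar>" by (rule abs_mult)
      also have "\<dots> \<le> 1 * \<bar>k 1\<bar>" using that by (intro mult_right_mono) auto
      finally show ?thesis by simp
    qed
    ultimately show ?thesis using bnd[OF that] unfolding M'_def by linarith
  qed
  have hb: "\<bar>h s\<bar> \<le> M'" for s
  proof -
    have "h s = h (frac s + of_int \<lfloor>s\<rfloor>)" by (simp add: frac_def)
    then have "h s = h (frac s) + h (of_int \<lfloor>s\<rfloor>)" by (simp only: hadd)
    then have "h s = h (frac s)" using hint by simp
    moreover have "frac s \<in> {0..1}" using frac_lt_1[of s] frac_ge_0[of s] by simp
    ultimately show ?thesis using hb01 by simp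
  qed
  have hmul: "h (of_nat n * s) = of_nat n * h s" for n
  proof (induction n)
    case 0 then show ?case using h0 by simp
  next
    case (Suc n)
    have "h (of_nat (Suc n) * s) = h (of_nat n * s + s)" by (simp add: algebra_simps)
    also have "\<dots> = h (of_nat n * s) + h s" by (rule hadd)
    finally show ?case using Suc by (simp add: algebra_simps)
  qed
  have "h s = 0"
  proof (rule ccontr)
    assume ne: "h s \<noteq> 0"
    then have pos: "\<bar>h s\<bar> > 0" by simp
    obtain n :: nat where n: "M' / \<bar>h s\<bar> < of_nat n" using reals_Archimedean2 by blast
    then have "M' < of_nat n * \<bar>h s\<bar>" using pos by (simp add: divide_less_eq)
    also have "\<dots> = \<bar>h (of_nat n * s)\<bar>" by (simp add: hmul abs_mult)
    finally show False using hb[of "of_nat n * s"] by simp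
  qed
  then show ?thesis unfolding h_def by simp
qed


lemma quadform2: "(l::real^2) \<bullet> (M *v l) = M$1$1 * (l$1)\<^sup>2 + (M$1$2 + M$2$1) * l$1 * l$2 + M$2$2 * (l$2)\<^sup>2"
  by (simp add: inner2 matrix_vector_mult_def sum_2 power2_eq_square algebra_simps)

lemma quad_form_exists:
  fixes \<phi> :: "real^2 \<Rightarrow> real"
  assumes hom: "\<And>t a. \<phi> (t *\<^sub>R a) = t\<^sup>2 * \<phi> a"
    and par: "\<And>a b. \<phi> (a + b) + \<phi> (a - b) = 2 * \<phi> a + 2 * \<phi> b"
    and bnd: "\<And>a. 0 \<le> \<phi> a \<and> \<phi> a \<le> (norm a)\<^sup>2"
  shows "\<exists>M::real^2^2. transpose M = M \<and> (\<forall>l. l \<bullet> (M *v l) = \<phi> l)"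
proof -
  define B where "B x y = \<phi> (x + y) - \<phi> (x - y)" for x y
  have even: "\<phi> (- z) = \<phi> z" for z using hom[of "-1" z] by simp
  have Bsym: "B x y = B y x" for x y
  proof -
    have "\<phi> (y - x) = \<phi> (x - y)" using even[of "x - y"] by simp
    then show ?thesis unfolding B_def by (simp add: add.commute)
  qed
  have B0: "B 0 y = 0" for y unfolding B_def using even[of y] by simp
  have Bii: "B (x + z) y + B (x - z) y = 2 * B x y" for x y z
  proof -
    have p1: "\<phi> ((x + y) + z) + \<phi> ((x + y) - z) = 2 * \<phi> (x + y) + 2 * \<phi> z" by (rule par)
    have p2: "\<phi> ((x - y) + z) + \<phi> ((x - y) - z) = 2 * \<phi> (x - y) + 2 * \<phi> z" by (rule par)
    have e1: "x + z + y = (x + y) + z" and e2: "x + z - y = (x - y) + z"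
      and e3: "x - z + y = (x + y) - z" and e4: "x - z - y = (x - y) - z" by (simp_all add: algebra_simps)
    have "B (x + z) y + B (x - z) y = \<phi> ((x + y) + z) - \<phi> ((x - y) + z) + (\<phi> ((x + y) - z) - \<phi> ((x - y) - z))"
      unfolding B_def e1 e2 e3 e4 by simp
    moreover have "2 * B x y = 2 * (\<phi> (x + y) - \<phi> (x - y))" unfolding B_def by simp
    ultimately show ?thesis using p1 p2 by (simp add: algebra_simps)
  qed
  have Bdouble: "B (x + x) y = 2 * B x y" for x y using Bii[of x x y] B0 by simp
  have Badd: "B (u + v) y = B u y + B v y" for u v y
  proof -
    define x where "x = (1/2) *\<^sub>R (u + v)"
    define z where "z = (1/2) *\<^sub>R (u - v)"
    have "x + z = u" "x - z = v" "x + x = u + v" unfolding x_def z_def by (simp_all add: vec_eq_iff field_simps)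
    then show ?thesis using Bii[of x z y] Bdouble[of x y] by simp
  qed
  have Bscale: "B (s *\<^sub>R x) y = s * B x y" for s x y
  proof -
    have "B (s *\<^sub>R x) y = s * B (1 *\<^sub>R x) y"
    proof (rule additive_bounded_linear[where k = "\<lambda>s. B (s *\<^sub>R x) y" and M = "2 * (norm x + norm y)\<^sup>2"])
      show "B ((s + t) *\<^sub>R x) y = B (s *\<^sub>R x) y + B (t *\<^sub>R x) y" for s t
        by (simp add: scaleR_add_left Badd)
    next
      fix s :: real assume s: "s \<in> {0..1}"
      have nb: "norm (s *\<^sub>R x + w) \<le> norm x + norm y" if "norm w = norm y" for w
      proof -
        have "norm (s *\<^sub>R x + w) \<le> norm (s *\<^sub>R x) + norm w" by (rule norm_triangle_ineq)
        also have "norm (s *\<^sub>R x) = \<bar>s\<bar> * norm x" by simp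
        also have "\<bar>s\<bar> * norm x \<le> 1 * norm x" using s by (intro mult_right_mono) auto
        finally show ?thesis using that by simp
      qed
      have sq: "(norm (s *\<^sub>R x + w))\<^sup>2 \<le> (norm x + norm y)\<^sup>2" if "norm w = norm y" for w
        by (rule power_mono[OF nb[OF that]]) simp
      have a1: "\<phi> (s *\<^sub>R x + y) \<le> (norm x + norm y)\<^sup>2" using order.trans[OF conjunct2[OF bnd[of "s *\<^sub>R x + y"]] sq[of y]] by simp
      have a2: "\<phi> (s *\<^sub>R x - y) \<le> (norm x + norm y)\<^sup>2" using order.trans[OF conjunct2[OF bnd[of "s *\<^sub>R x + - y"]] sq[of "- y"]] by simp
      have "0 \<le> \<phi> (s *\<^sub>R x + y)" "0 \<le> \<phi> (s *\<^sub>R x - y)" using bnd by auto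
      then show "\<bar>B (s *\<^sub>R x) y\<bar> \<le> 2 * (norm x + norm y)\<^sup>2"
        unfolding B_def using a1 a2 by linarith
    qed
    then show ?thesis by simp
  qed
  have phisum: "\<phi> (u + v) = \<phi> u + \<phi> v + B u v / 2" for u v
  proof -
    have h: "\<phi> (u - v) = 2 * \<phi> u + 2 * \<phi> v - \<phi> (u + v)" using par[of u v] by (simp add: algebra_simps)
    show ?thesis unfolding B_def h by (simp add: field_simps)
  qed
  define e1 :: "real^2" where "e1 = axis 1 1"
  define e2 :: "real^2" where "e2 = axis 2 1"
  define M :: "real^2^2" where "M = (\<chi> i j. if i = 1 \<and> j = 1 then \<phi> e1 else if i = 2 \<and> j = 2 then \<phi> e2 else B e1 e2 / 4)"
  have "transpose M = M" by (simp add: M_def transpose_def vec_eq_iff forall_2)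
  moreover have "l \<bullet> (M *v l) = \<phi> l" for l
  proof -
    have "\<phi> l = \<phi> (l$1 *\<^sub>R e1 + l$2 *\<^sub>R e2)" using vec2_expand[of l] by (simp add: e1_def e2_def)
    also have "\<dots> = (l$1)\<^sup>2 * \<phi> e1 + (l$2)\<^sup>2 * \<phi> e2 + B (l$1 *\<^sub>R e1) (l$2 *\<^sub>R e2) / 2"
      by (simp add: phisum hom)
    also have "B (l$1 *\<^sub>R e1) (l$2 *\<^sub>R e2) = l$1 * l$2 * B e1 e2"
      using Bscale Bsym by (metis mult.assoc)
    finally show ?thesis by (simp add: quadform2 M_def algebra_simps)
  qed
  ultimately show ?thesis by blast
qed


lemma par_law: "(norm (x + y))\<^sup>2 + (norm (x - y))\<^sup>2 = 2 * (norm x)\<^sup>2 + 2 * (norm (y::real^2))\<^sup>2"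
  by (simp add: power2_norm_eq_inner inner_add_left inner_add_right inner_diff_left inner_diff_right
      inner_commute algebra_simps)

lemma integral_cmult_real: "integral S (\<lambda>x. c * f x) = c * integral S (f :: real^2 \<Rightarrow> real)"
  using integral_cmul[of S c f] by simp

lemma content_unit: "Henstock_Kurzweil_Integration.content (cbox (vec 0) (vec 1) :: (real^2) set) = 1"
proof -
  have "cbox (vec 0) (vec 1 :: real^2) \<noteq> {}" by (simp add: interval_ne_empty_cart)
  then show ?thesis by (simp add: content_cbox_cart)
qed

definition Rq :: "(real^2 \<Rightarrow> real) \<Rightarrow> real^2 \<Rightarrow> (real^2 \<Rightarrow> real) \<Rightarrow> real" where
  "Rq W l f = torus_int (\<lambda>x. (norm (l - grad f x))\<^sup>2 * exp (-2 * W x)) / torus_int (\<lambda>x. exp (-2 * W x))"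

lemma qD_Rq: "qD W l = (INF f\<in>Cinf_T2. Rq W l f)" by (simp add: qD_def Rq_def)

lemma Z_pos:
  fixes W :: "real^2 \<Rightarrow> real"
  assumes cW: "continuous_on UNIV W"
  shows "torus_int (\<lambda>x. exp (-2 * W x)) > 0"
proof -
  let ?S = "cbox (vec 0) (vec 1) :: (real^2) set"
  have cw: "continuous_on ?S (\<lambda>x. exp (-2 * W x))"
    by (intro continuous_intros continuous_on_subset[OF cW]) auto
  have ne: "?S \<noteq> {}" by (simp add: interval_ne_empty_cart)
  obtain x0 where x0: "x0 \<in> ?S" "\<And>y. y \<in> ?S \<Longrightarrow> exp (-2 * W x0) \<le> exp (-2 * W y)"
    using continuous_attains_inf[OF compact_cbox ne cw] by blast
  have i2: "(\<lambda>x. exp (-2 * W x)) integrable_on ?S" by (rule integrable_continuous[OF cw])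
  have "integral ?S (\<lambda>x. exp (-2 * W x0)) \<le> integral ?S (\<lambda>x. exp (-2 * W x))"
    by (rule integral_le[OF integrable_const i2]) (rule x0(2))
  moreover have "integral ?S (\<lambda>x. exp (-2 * W x0)) = exp (-2 * W x0)"
    using content_unit by simp
  ultimately show ?thesis unfolding torus_int_def
    using exp_gt_zero[of "-2 * W x0"] by linarith
qed

lemma int_N:
  fixes W :: "real^2 \<Rightarrow> real"
  assumes cW: "continuous_on UNIV W" and f: "f \<in> Cinf_T2"
  shows "(\<lambda>x. (norm (l - grad f x))\<^sup>2 * exp (-2 * W x)) integrable_on cbox (vec 0) (vec 1)"
proof -
  have cg: "continuous_on UNIV (grad f)" by (rule grad_cont) (use f in \<open>simp add: Cinf_T2_def\<close>)
  have "continuous_on UNIV (\<lambda>x. (norm (l - grad f x))\<^sup>2 * exp (-2 * W x))"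
    by (intro continuous_intros cg cW)
  then show ?thesis by (rule integrable_continuous[OF continuous_on_subset]) auto
qed

lemma Rq_nonneg:
  fixes W :: "real^2 \<Rightarrow> real"
  assumes cW: "continuous_on UNIV W" and f: "f \<in> Cinf_T2"
  shows "0 \<le> Rq W l f"
proof -
  have "0 \<le> torus_int (\<lambda>x. (norm (l - grad f x))\<^sup>2 * exp (-2 * W x))"
    unfolding torus_int_def by (rule integral_nonneg[OF int_N[OF cW f]]) simp
  then show ?thesis unfolding Rq_def using Z_pos[OF cW] by simp
qed

lemma bdd_Rq:
  fixes W :: "real^2 \<Rightarrow> real"
  assumes cW: "continuous_on UNIV W"
  shows "bdd_below ((\<lambda>f. Rq W l f) ` Cinf_T2)"
  by (rule bdd_belowI[where m = 0]) (auto intro: Rq_nonneg[OF cW])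

lemma qD_le:
  fixes W :: "real^2 \<Rightarrow> real"
  assumes cW: "continuous_on UNIV W" and f: "f \<in> Cinf_T2"
  shows "qD W l \<le> Rq W l f"
  unfolding qD_Rq by (rule cINF_lower[OF bdd_Rq[OF cW] f])

lemma qD_ge:
  assumes "\<And>f. f \<in> Cinf_T2 \<Longrightarrow> c \<le> Rq W l f"
  shows "c \<le> qD W l"
  unfolding qD_Rq using Cinf_const assms by (intro cINF_greatest) auto

lemma Rq_zero:
  fixes W :: "real^2 \<Rightarrow> real"
  assumes cW: "continuous_on UNIV W"
  shows "Rq W l (\<lambda>x. 0) = (norm l)\<^sup>2"
proof -
  have "torus_int (\<lambda>x. (norm (l - grad (\<lambda>x. 0) x))\<^sup>2 * exp (-2 * W x)) =
        (norm l)\<^sup>2 * torus_int (\<lambda>x. exp (-2 * W x))"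
    unfolding torus_int_def grad_const by (simp add: integral_cmult_real)
  then show ?thesis unfolding Rq_def using Z_pos[OF cW] by simp
qed

lemma Rq_par:
  fixes W :: "real^2 \<Rightarrow> real"
  assumes cW: "continuous_on UNIV W" and f: "f \<in> Cinf_T2" and g: "g \<in> Cinf_T2"
  shows "Rq W (a + b) (\<lambda>x. 1 * f x + 1 * g x) + Rq W (a - b) (\<lambda>x. 1 * f x + (-1) * g x)
         = 2 * Rq W a f + 2 * Rq W b g"
proof -
  have sf: "smooth f" and sg: "smooth g" using f g by (auto simp: Cinf_T2_def)
  let ?w = "\<lambda>x. exp (-2 * W x)"
  have fg1: "(\<lambda>x. 1 * f x + 1 * g x) \<in> Cinf_T2" and fg2: "(\<lambda>x. 1 * f x + (-1) * g x) \<in> Cinf_T2"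
    using Cinf_lin[OF f g] by blast+
  have pw: "(norm (a + b - grad (\<lambda>x. 1 * f x + 1 * g x) x))\<^sup>2 * ?w x +
            (norm (a - b - grad (\<lambda>x. 1 * f x + (-1) * g x) x))\<^sup>2 * ?w x =
            2 * ((norm (a - grad f x))\<^sup>2 * ?w x) + 2 * ((norm (b - grad g x))\<^sup>2 * ?w x)" for x
  proof -
    have e1: "a + b - grad (\<lambda>x. 1 * f x + 1 * g x) x = (a - grad f x) + (b - grad g x)"
      using grad_lin[OF sf sg, of 1 1 x] by (simp add: algebra_simps)
    have e2: "a - b - grad (\<lambda>x. 1 * f x + (-1) * g x) x = (a - grad f x) - (b - grad g x)"
      using grad_lin[OF sf sg, of 1 "-1" x] by (simp add: algebra_simps)
    have "((norm ((a - grad f x) + (b - grad g x)))\<^sup>2 + (norm ((a - grad f x) - (b - grad g x)))\<^sup>2) * ?w x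
        = (2 * (norm (a - grad f x))\<^sup>2 + 2 * (norm (b - grad g x))\<^sup>2) * ?w x"
      by (simp only: par_law)
    then show ?thesis unfolding e1 e2 by (simp only: distrib_right mult.assoc)
  qed
  have "torus_int (\<lambda>x. (norm (a + b - grad (\<lambda>x. 1 * f x + 1 * g x) x))\<^sup>2 * ?w x) +
        torus_int (\<lambda>x. (norm (a - b - grad (\<lambda>x. 1 * f x + (-1) * g x) x))\<^sup>2 * ?w x) =
        torus_int (\<lambda>x. 2 * ((norm (a - grad f x))\<^sup>2 * ?w x) + 2 * ((norm (b - grad g x))\<^sup>2 * ?w x))"
    unfolding torus_int_def pw[symmetric]
    by (rule integral_add[symmetric]; rule int_N[OF cW]; rule fg1 fg2)
  also have "\<dots> = 2 * torus_int (\<lambda>x. (norm (a - grad f x))\<^sup>2 * ?w x) + 2 * torus_int (\<lambda>x. (norm (b - grad g x))\<^sup>2 * ?w x)"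
  proof -
    have i1: "(\<lambda>x. 2 * ((norm (a - grad f x))\<^sup>2 * ?w x)) integrable_on cbox (vec 0) (vec 1)"
      using integrable_cmul[OF int_N[OF cW f], of 2] by simp
    have i2: "(\<lambda>x. 2 * ((norm (b - grad g x))\<^sup>2 * ?w x)) integrable_on cbox (vec 0) (vec 1)"
      using integrable_cmul[OF int_N[OF cW g], of 2] by simp
    show ?thesis unfolding torus_int_def integral_add[OF i1 i2] integral_cmult_real ..
  qed
  finally show ?thesis unfolding Rq_def by (simp add: add_divide_distrib[symmetric])
qed

lemma Rq_scale:
  fixes W :: "real^2 \<Rightarrow> real"
  assumes cW: "continuous_on UNIV W" and f: "f \<in> Cinf_T2"
  shows "Rq W (t *\<^sub>R a) (\<lambda>x. t * f x + 0 * f x) = t\<^sup>2 * Rq W a f"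
proof -
  have sf: "smooth f" using f by (auto simp: Cinf_T2_def)
  have pw: "(norm (t *\<^sub>R a - grad (\<lambda>x. t * f x + 0 * f x) x))\<^sup>2 = t\<^sup>2 * (norm (a - grad f x))\<^sup>2" for x
  proof -
    have "t *\<^sub>R a - grad (\<lambda>x. t * f x + 0 * f x) x = t *\<^sub>R (a - grad f x)"
      using grad_lin[OF sf sf, of t 0 x] by (simp add: algebra_simps)
    then show ?thesis by (simp add: power_mult_distrib)
  qed
  show ?thesis unfolding Rq_def pw torus_int_def
    by (simp add: mult.assoc integral_cmult_real)
qed


lemma qD_nonneg:
  fixes W :: "real^2 \<Rightarrow> real"
  assumes cW: "continuous_on UNIV W"
  shows "0 \<le> qD W l"
  by (rule qD_ge) (rule Rq_nonneg[OF cW])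

lemma qD_hom_le:
  fixes W :: "real^2 \<Rightarrow> real"
  assumes cW: "continuous_on UNIV W" and t: "t \<noteq> 0"
  shows "qD W (t *\<^sub>R a) \<le> t\<^sup>2 * qD W a"
proof -
  have tp: "t\<^sup>2 > 0" using t by simp
  have "qD W (t *\<^sub>R a) / t\<^sup>2 \<le> qD W a"
  proof (rule qD_ge)
    fix f assume f: "f \<in> Cinf_T2"
    have "qD W (t *\<^sub>R a) \<le> Rq W (t *\<^sub>R a) (\<lambda>x. t * f x + 0 * f x)"
      by (rule qD_le[OF cW Cinf_lin[OF f f]])
    also have "\<dots> = t\<^sup>2 * Rq W a f" by (rule Rq_scale[OF cW f])
    finally show "qD W (t *\<^sub>R a) / t\<^sup>2 \<le> Rq W a f" using tp by (simp add: divide_le_eq mult.commute)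
  qed
  then show ?thesis using tp by (simp add: divide_le_eq mult.commute)
qed

lemma qD_hom:
  fixes W :: "real^2 \<Rightarrow> real"
  assumes cW: "continuous_on UNIV W"
  shows "qD W (t *\<^sub>R a) = t\<^sup>2 * qD W a"
proof (cases "t = 0")
  case True
  have "qD W 0 \<le> Rq W 0 (\<lambda>x. 0)" by (rule qD_le[OF cW Cinf_const])
  also have "\<dots> = 0" using Rq_zero[OF cW] by simp
  finally show ?thesis using True qD_nonneg[OF cW, of 0] by simp
next
  case False
  have "qD W a = qD W (inverse t *\<^sub>R (t *\<^sub>R a))" using False by simp
  also have "\<dots> \<le> (inverse t)\<^sup>2 * qD W (t *\<^sub>R a)" by (rule qD_hom_le[OF cW]) (use False in simp)
  finally have "t\<^sup>2 * qD W a \<le> qD W (t *\<^sub>R a)" using False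
    by (simp add: power_inverse field_simps)
  then show ?thesis using qD_hom_le[OF cW False, of a] by simp
qed

lemma qD_par_le:
  fixes W :: "real^2 \<Rightarrow> real"
  assumes cW: "continuous_on UNIV W"
  shows "qD W (a + b) + qD W (a - b) \<le> 2 * qD W a + 2 * qD W b"
proof -
  let ?L = "qD W (a + b) + qD W (a - b)"
  have step: "?L \<le> 2 * Rq W a f + 2 * Rq W b g" if f: "f \<in> Cinf_T2" and g: "g \<in> Cinf_T2" for f g
  proof -
    have "qD W (a + b) \<le> Rq W (a + b) (\<lambda>x. 1 * f x + 1 * g x)" by (rule qD_le[OF cW Cinf_lin[OF f g]])
    moreover have "qD W (a - b) \<le> Rq W (a - b) (\<lambda>x. 1 * f x + (-1) * g x)" by (rule qD_le[OF cW Cinf_lin[OF f g]])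
    ultimately show ?thesis using Rq_par[OF cW f g, of a b] by linarith
  qed
  have s1: "(?L - 2 * Rq W b g) / 2 \<le> qD W a" if g: "g \<in> Cinf_T2" for g
    by (rule qD_ge) (use step[OF _ g] in force)
  have "(?L - 2 * qD W a) / 2 \<le> qD W b"
    by (rule qD_ge) (use s1 in force)
  then show ?thesis by simp
qed

lemma qD_par:
  fixes W :: "real^2 \<Rightarrow> real"
  assumes cW: "continuous_on UNIV W"
  shows "qD W (a + b) + qD W (a - b) = 2 * qD W a + 2 * qD W b"
proof -
  have "qD W ((a + b) + (a - b)) + qD W ((a + b) - (a - b)) \<le> 2 * qD W (a + b) + 2 * qD W (a - b)"
    by (rule qD_par_le[OF cW])
  moreover have "(a + b) + (a - b) = 2 *\<^sub>R a" "(a + b) - (a - b) = 2 *\<^sub>R b"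
    by (simp_all add: scaleR_2 algebra_simps)
  ultimately have "4 * qD W a + 4 * qD W b \<le> 2 * qD W (a + b) + 2 * qD W (a - b)"
    by (simp add: qD_hom[OF cW])
  then show ?thesis using qD_par_le[OF cW, of a b] by linarith
qed

lemma qD_bnd:
  fixes W :: "real^2 \<Rightarrow> real"
  assumes cW: "continuous_on UNIV W"
  shows "0 \<le> qD W l \<and> qD W l \<le> (norm l)\<^sup>2"
  using qD_nonneg[OF cW] qD_le[OF cW Cinf_const, of l 0] Rq_zero[OF cW, of l] by simp

lemma qD_quad:
  fixes W :: "real^2 \<Rightarrow> real"
  assumes cW: "continuous_on UNIV W"
  shows "\<exists>M::real^2^2. transpose M = M \<and> (\<forall>l. l \<bullet> (M *v l) = qD W l)"
  by (rule quad_form_exists) (auto simp: qD_hom[OF cW] qD_par[OF cW] qD_bnd[OF cW])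

lemma sym_unique:
  fixes A B :: "real^2^2"
  assumes "transpose A = A" "transpose B = B" "\<And>l. l \<bullet> (A *v l) = l \<bullet> (B *v l)"
  shows "A = B"
proof -
  have a: "A$1$2 = A$2$1" "B$1$2 = B$2$1"
    using arg_cong[OF assms(1), of "\<lambda>M. M$2$1"] arg_cong[OF assms(2), of "\<lambda>M. M$2$1"]
    by (simp_all add: transpose_def)
  have q: "A$1$1 * (l$1)\<^sup>2 + (A$1$2 + A$2$1) * l$1 * l$2 + A$2$2 * (l$2)\<^sup>2 =
           B$1$1 * (l$1)\<^sup>2 + (B$1$2 + B$2$1) * l$1 * l$2 + B$2$2 * (l$2)\<^sup>2" for l :: "real^2"
    using assms(3)[of l] by (simp add: quadform2)
  have 1: "A$1$1 = B$1$1" using q[of "axis 1 1"] by (simp add: axis_def)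
  have 2: "A$2$2 = B$2$2" using q[of "axis 2 1"] by (simp add: axis_def)
  have "A$1$2 + A$2$1 = B$1$2 + B$2$1" using q[of "axis 1 1 + axis 2 1"] 1 2 by (simp add: axis_def)
  then have 3: "A$1$2 = B$1$2" "A$2$1 = B$2$1" using a by simp_all
  show ?thesis using 1 2 3 by (simp add: vec_eq_iff forall_2)
qed

lemma the_quad:
  assumes "\<exists>M::real^2^2. transpose M = M \<and> (\<forall>l. l \<bullet> (M *v l) = \<phi> l)"
  shows "transpose (THE M. transpose M = M \<and> (\<forall>l. l \<bullet> (M *v l) = \<phi> l)) =
           (THE M. transpose M = M \<and> (\<forall>l. l \<bullet> (M *v l) = \<phi> l)) \<and>
         (\<forall>l. l \<bullet> ((THE M. transpose M = M \<and> (\<forall>l. l \<bullet> (M *v l) = \<phi> l)) *v l) = \<phi> l)"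
proof (rule theI')
  show "\<exists>!M::real^2^2. transpose M = M \<and> (\<forall>l. l \<bullet> (M *v l) = \<phi> l)"
  proof -
    obtain M :: "real^2^2" where M: "transpose M = M" "\<forall>l. l \<bullet> (M *v l) = \<phi> l" using assms by blast
    show ?thesis
    proof (rule ex1I[of _ M])
      show "transpose M = M \<and> (\<forall>l. l \<bullet> (M *v l) = \<phi> l)" using M by blast
      fix N :: "real^2^2" assume hN: "transpose N = N \<and> (\<forall>l. l \<bullet> (N *v l) = \<phi> l)"
      show "N = M" by (rule sym_unique) (use hN M in auto)
    qed
  qed
qed

lemma the_eq:
  fixes M :: "real^2^2"
  assumes "transpose M = M" "\<forall>l. l \<bullet> (M *v l) = \<phi> l"
  shows "(THE M. transpose M = M \<and> (\<forall>l. l \<bullet> (M *v l) = \<phi> l)) = M"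
proof (rule the_equality)
  show "transpose M = M \<and> (\<forall>l. l \<bullet> (M *v l) = \<phi> l)" using assms by blast
  fix N :: "real^2^2" assume hN: "transpose N = N \<and> (\<forall>l. l \<bullet> (N *v l) = \<phi> l)"
  show "N = M" by (rule sym_unique) (use hN assms in auto)
qed

lemma inner_transpose2: "(l::real^2) \<bullet> (transpose (A::real^2^2) *v v) = (A *v l) \<bullet> v"
  by (simp add: inner2 matrix_vector_mult_def sum_2 transpose_def algebra_simps)

theorem proposition4p4:
  fixes U :: "real^2 \<Rightarrow> real"
  assumes "U \<in> Cinf_T2"
  shows "Qmat U = transpose Pmat ** Dmat (\<lambda>x. - U x) ** Pmat"
proof -
  have cU: "continuous_on UNIV U" using assms by (simp add: Cinf_T2_def smooth_cont)
  have cW: "continuous_on UNIV (\<lambda>x. - U x)" by (intro continuous_intros cU)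
  define D where "D = Dmat (\<lambda>x. - U x)"
  have D: "transpose D = D" "\<And>l. l \<bullet> (D *v l) = qD (\<lambda>x. - U x) l"
    using the_quad[OF qD_quad[OF cW]] unfolding D_def Dmat_def by auto
  define Q where "Q = transpose Pmat ** D ** Pmat"
  have "transpose Q = Q"
    unfolding Q_def by (simp add: matrix_transpose_mul D(1) matrix_mul_assoc)
  moreover have "\<forall>l. l \<bullet> (Q *v l) = qQ U l"
  proof
    fix l
    have e: "Q *v l = transpose Pmat *v (D *v (Pmat *v l))"
      unfolding Q_def by (simp add: matrix_vector_mul_assoc matrix_mul_assoc)
    have "l \<bullet> (Q *v l) = (Pmat *v l) \<bullet> (D *v (Pmat *v l))" unfolding e inner_transpose2 ..
    also have "\<dots> = qD (\<lambda>x. - U x) (Pmat *v l)" by (rule D(2))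
    also have "\<dots> = qQ U l" by (rule qQ_eq[symmetric])
    finally show "l \<bullet> (Q *v l) = qQ U l" .
  qed
  ultimately have "Qmat U = Q" unfolding Qmat_def by (rule the_eq)
  then show ?thesis unfolding Q_def D_def .
qed


end
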